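(* Let $H$ be the Hamiltonian defined on the interval $[0,1]$ a.e. by \[ H(t):= \begin{cases} \begin{pmatrix}1&0\\0&0\end{pmatrix} & \text{if } e^{-(2n+1)} < t \le e^{-2n}, \\[1.5ex] \begin{pmatrix}0&0\\0&1\end{pmatrix} & \text{if } e^{-(2n+2)} < t \le e^{-(2n+1)} \end{cases} \qquad\text{for }n\in\mathbb{N}_0. \] Let $\kappa_H(r)$ and $K_H(t;r)$ be defined as below with $c=1$. Then \[ \kappa_H(r) \asymp \log r, \qquad \int_0^1 K_H(t;r)\,\mathrm{d}t \asymp (\log r)^2, \] for $r>r_0=\frac{1}{\sqrt{\det\Omega(0,1)}}$.
   Context: Write $H=\begin{pmatrix}h_1&h_3\\ h_3&h_2\end{pmatrix}$, $\Omega(s,t)=\int_s^tH(u)\,\mathrm{d}u$, $\omega_j(s,t)=\int_s^th_j$. With $c=1$: $(\hat t,\hat s)$ is the unique pair with $\det\Omega(0,\hat t(r))=\frac{1}{r^2}$ for $r>r_0$ and $\hat s(t;r)\le t$, $\det\Omega(\hat s(t;r),t)=\frac{1}{r^2}$ for $t\ge\hat t(r)$; $K_H(t;r):=\mathbf{1}_{[0,\hat t(r))}(t)\frac{\omega_2(0,t)h_1(t)}{\frac{1}{r^2}+(\omega_3(0,t))^2}+\mathbf{1}_{[\hat t(r),1)}(t)\frac{h_1(t)}{\omega_1(\hat s(t;r),t)}$. $\kappa_H(r)$ is produced by the algorithm: $\sigma_0^{(r)}:=0$; if $\det\Omega(\sigma_{j-1}^{(r)},1)>\frac{1}{r^2}$,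 let $\sigma_j^{(r)}\in(\sigma_{j-1}^{(r)},1)$ be the unique point with $\det\Omega(\sigma_{j-1}^{(r)},\sigma_j^{(r)})=\frac{1}{r^2}$; otherwise set $\sigma_j^{(r)}:=1$, $\kappa_H(r):=j$ and stop. $f\asymp g$ means $c_1g\le f\le c_2g$ for constants $c_1,c_2>0$ (here for sufficiently large $r$). *)

theory Defs
  imports "HOL-Analysis.Analysis"
begin

text \<open>A Hamiltonian H = ((h1,h3),(h3,h2)) is given by its three entry functions
  (real-valued, taken as 0 outside the base interval).\<close>

definition omega :: "(real \<Rightarrow> real) \<Rightarrow> real \<Rightarrow> real \<Rightarrow> real" where
  "omega h s t = integral {s..t} h"

definition detOmega ::
  "(real \<Rightarrow> real) \<Rightarrow> (real \<Rightarrow> real) \<Rightarrow> (real \<Rightarrow> real) \<Rightarrow> real \<Rightarrow> real \<Rightarrow> real" where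
  "detOmega h1 h2 h3 s t = omega h1 s t * omega h2 s t - (omega h3 s t)\<^sup>2"

definition rzero :: "(real \<Rightarrow> real) \<Rightarrow> (real \<Rightarrow> real) \<Rightarrow> (real \<Rightarrow> real) \<Rightarrow> real" where
  "rzero h1 h2 h3 = 1 / sqrt (detOmega h1 h2 h3 0 1)"

definition that :: "(real \<Rightarrow> real) \<Rightarrow> (real \<Rightarrow> real) \<Rightarrow> (real \<Rightarrow> real) \<Rightarrow> real \<Rightarrow> real" where
  "that h1 h2 h3 r = (THE t. 0 \<le> t \<and> t \<le> 1 \<and> detOmega h1 h2 h3 0 t = 1 / r\<^sup>2)"

definition shat :: "(real \<Rightarrow> real) \<Rightarrow> (real \<Rightarrow> real) \<Rightarrow> (real \<Rightarrow> real) \<Rightarrow> real \<Rightarrow> real \<Rightarrow> real" where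
  "shat h1 h2 h3 t r = (THE s. 0 \<le> s \<and> s \<le> t \<and> detOmega h1 h2 h3 s t = 1 / r\<^sup>2)"

definition KH :: "(real \<Rightarrow> real) \<Rightarrow> (real \<Rightarrow> real) \<Rightarrow> (real \<Rightarrow> real) \<Rightarrow> real \<Rightarrow> real \<Rightarrow> real" where
  "KH h1 h2 h3 t r =
     (if 0 \<le> t \<and> t < that h1 h2 h3 r then
        omega h2 0 t * h1 t / (1 / r\<^sup>2 + (omega h3 0 t)\<^sup>2)
      else if that h1 h2 h3 r \<le> t \<and> t < 1 then
        h1 t / omega h1 (shat h1 h2 h3 t r) t
      else 0)"

primrec sigma ::
  "(real \<Rightarrow> real) \<Rightarrow> (real \<Rightarrow> real) \<Rightarrow> (real \<Rightarrow> real) \<Rightarrow> real \<Rightarrow> nat \<Rightarrow> real" where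
  "sigma h1 h2 h3 r 0 = 0"
| "sigma h1 h2 h3 r (Suc j) =
     (if detOmega h1 h2 h3 (sigma h1 h2 h3 r j) 1 > 1 / r\<^sup>2
      then (THE s. sigma h1 h2 h3 r j < s \<and> s < 1 \<and>
                   detOmega h1 h2 h3 (sigma h1 h2 h3 r j) s = 1 / r\<^sup>2)
      else 1)"

definition kappa :: "(real \<Rightarrow> real) \<Rightarrow> (real \<Rightarrow> real) \<Rightarrow> (real \<Rightarrow> real) \<Rightarrow> real \<Rightarrow> nat" where
  "kappa h1 h2 h3 r = (LEAST j. 0 < j \<and> sigma h1 h2 h3 r j = 1)"

definition hA :: "real \<Rightarrow> real" where
  "hA t = (if \<exists>n::nat. exp (-(2 * real n + 1)) < t \<and> t \<le> exp (-(2 * real n)) then 1 else 0)"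

definition hB :: "real \<Rightarrow> real" where
  "hB t = (if \<exists>n::nat. exp (-(2 * real n + 2)) < t \<and> t \<le> exp (-(2 * real n + 1)) then 1 else 0)"

definition hC :: "real \<Rightarrow> real" where
  "hC t = 0"

end

theory Submission
  imports Defs
begin

lemma bm_leb: "(f::real\<Rightarrow>real) \<in> borel_measurable borel \<Longrightarrow> f \<in> borel_measurable (lebesgue_on S)"
proof -
  assume "f \<in> borel_measurable borel"
  then have "f \<in> borel_measurable lborel" by simp
  then have "f \<in> borel_measurable lebesgue" by (rule measurable_completion)
  then show ?thesis by (rule measurable_restrict_space1)
qed

lemma hA_eq: "hA = indicator (\<Union>n::nat. {exp (-(2 * real n + 1))<..exp (-(2 * real n))})"
  by (auto simp: hA_def indicator_def fun_eq_iff)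
lemma hB_eq: "hB = indicator (\<Union>n::nat. {exp (-(2 * real n + 2))<..exp (-(2 * real n + 1))})"
  by (auto simp: hB_def indicator_def fun_eq_iff)

definition good :: "(real \<Rightarrow> real) \<Rightarrow> bool" where
  "good h \<longleftrightarrow> h \<in> borel_measurable borel \<and> (\<forall>t. 0 \<le> h t \<and> h t \<le> 1)"

lemma good_hA: "good hA"
  unfolding good_def by (auto simp: hA_def) (unfold hA_eq, measurable)
lemma good_hB: "good hB"
  unfolding good_def by (auto simp: hB_def) (unfold hB_eq, measurable)

lemma good_int: assumes "good h" shows "h integrable_on {a..b}"
proof (rule measurable_bounded_by_integrable_imp_integrable[where g="\<lambda>_. 1"])
  show "h \<in> borel_measurable (lebesgue_on {a..b})" using assms bm_leb good_def by blast
  show "(\<lambda>_. 1::real) integrable_on {a..b}" by (rule integrable_const_ivl)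
  show "norm (h x) \<le> 1" for x using assms by (auto simp: good_def)
  show "{a..b} \<in> sets lebesgue" by simp
qed

lemma level_unique:
  fixes m m' :: nat
  assumes "exp (-real m - 1) < t" "t \<le> exp (-real m)" "exp (-real m' - 1) < t" "t \<le> exp (-real m')"
  shows "m = m'"
proof -
  have "exp (-real m - 1) < exp (-real m')" using assms by linarith
  hence "real m' < real m + 1" by simp
  moreover have "exp (-real m' - 1) < exp (-real m)" using assms by linarith
  hence "real m < real m' + 1" by simp
  ultimately show ?thesis by linarith
qed

lemma hA_level:
  fixes m :: nat
  assumes "exp (-real m - 1) < t" "t \<le> exp (-real m)"
  shows "hA t = (if even m then 1 else 0)"
proof (cases "even m")
  case True
  then obtain n where n: "m = 2 * n" by blast
  have e: "-(2 * real n + 1) = -real m - 1" "-(2 * real n) = -real m" using n by auto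
  have "exp (-(2 * real n + 1)) < t \<and> t \<le> exp (-(2 * real n))"
    using assms by (simp only: e)
  thus ?thesis using True unfolding hA_def by auto
next
  case False
  have "\<not> (exp (-(2 * real n + 1)) < t \<and> t \<le> exp (-(2 * real n)))" for n
  proof
    assume "exp (-(2 * real n + 1)) < t \<and> t \<le> exp (-(2 * real n))"
    moreover have e: "-real (2*n) - 1 = -(2 * real n + 1)" "-real (2*n) = -(2 * real n)" by simp_all
    ultimately have "exp (-real (2*n) - 1) < t" "t \<le> exp (-real (2*n))" by (simp_all only: e)
    from level_unique[OF assms this] False show False by simp
  qed
  thus ?thesis using False unfolding hA_def by auto
qed

lemma hB_level:
  fixes m :: nat
  assumes "exp (-real m - 1) < t" "t \<le> exp (-real m)"
  shows "hB t = (if odd m then 1 else 0)"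
proof (cases "odd m")
  case True
  then obtain n where n: "m = 2 * n + 1" using oddE by blast
  have e: "-(2 * real n + 2) = -real m - 1" "-(2 * real n + 1) = -real m" using n by auto
  have "exp (-(2 * real n + 2)) < t \<and> t \<le> exp (-(2 * real n + 1))"
    using assms by (simp only: e)
  thus ?thesis using True unfolding hB_def by auto
next
  case False
  have "\<not> (exp (-(2 * real n + 2)) < t \<and> t \<le> exp (-(2 * real n + 1)))" for n
  proof
    assume "exp (-(2 * real n + 2)) < t \<and> t \<le> exp (-(2 * real n + 1))"
    moreover have e: "-real (2*n+1) - 1 = -(2 * real n + 2)" "-real (2*n+1) = -(2 * real n + 1)" by simp_all
    ultimately have "exp (-real (2*n+1) - 1) < t" "t \<le> exp (-real (2*n+1))" by (simp_all only: e)
    from level_unique[OF assms this] False show False by simp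
  qed
  thus ?thesis using False unfolding hB_def by auto
qed

definition lev :: "real \<Rightarrow> nat" where "lev t = nat \<lfloor>- ln t\<rfloor>"

lemma lev_prop:
  assumes "0 < t" "t \<le> 1"
  shows "exp (-real (lev t) - 1) < t" "t \<le> exp (-real (lev t))"
proof -
  have "0 \<le> - ln t" using assms by simp
  hence e: "real (lev t) = of_int \<lfloor>- ln t\<rfloor>" unfolding lev_def by simp
  have a: "of_int \<lfloor>- ln t\<rfloor> \<le> - ln t" "- ln t < of_int \<lfloor>- ln t\<rfloor> + 1" by linarith+
  have "-real (lev t) - 1 < ln t" using a e by linarith
  hence "exp (-real (lev t) - 1) < exp (ln t)" by simp
  thus "exp (-real (lev t) - 1) < t" using assms by simp
  have "ln t \<le> -real (lev t)" using a e by linarith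
  hence "exp (ln t) \<le> exp (-real (lev t))" by simp
  thus "t \<le> exp (-real (lev t))" using assms by simp
qed

lemma lev_eq:
  assumes "exp (-real m - 1) < t" "t \<le> exp (-real m)" "t \<le> 1"
  shows "lev t = m"
proof -
  have "0 < t" using assms(1) by (meson exp_gt_zero less_trans)
  from level_unique[OF assms(1,2) lev_prop[OF this assms(3)]] show ?thesis by simp
qed

lemma hAB_sum: assumes "0 < t" "t \<le> 1" shows "hA t + hB t = 1"
  using hA_level[OF lev_prop[OF assms]] hB_level[OF lev_prop[OF assms]] by auto

lemma om_nonneg: "good h \<Longrightarrow> 0 \<le> omega h s t"
  unfolding omega_def by (rule integral_nonneg) (auto simp: good_int good_def)

lemma om_add: "good h \<Longrightarrow> s \<le> t \<Longrightarrow> t \<le> u \<Longrightarrow> omega h s u = omega h s t + omega h t u"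
  unfolding omega_def using Henstock_Kurzweil_Integration.integral_combine[where a=s and c=t and b=u and f=h] good_int[of h s u] by simp

lemma om_le: "good h \<Longrightarrow> s \<le> t \<Longrightarrow> omega h s t \<le> t - s"
proof -
  assume g: "good h" "s \<le> t"
  have "omega h s t \<le> integral {s..t} (\<lambda>_. 1::real)"
    unfolding omega_def by (rule integral_le) (use g in \<open>auto simp: good_int good_def\<close>)
  thus ?thesis using g by simp
qed

lemma om_mono: "good h \<Longrightarrow> s1 \<le> s2 \<Longrightarrow> s2 \<le> t2 \<Longrightarrow> t2 \<le> t1 \<Longrightarrow> omega h s2 t2 \<le> omega h s1 t1"
proof -
  assume a: "good h" "s1 \<le> s2" "s2 \<le> t2" "t2 \<le> t1"
  have "omega h s1 t1 = omega h s1 s2 + omega h s2 t1" using a by (intro om_add) auto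
  moreover have "omega h s2 t1 = omega h s2 t2 + omega h t2 t1" using a by (intro om_add) auto
  moreover have "0 \<le> omega h s1 s2" "0 \<le> omega h t2 t1" using a om_nonneg by auto
  ultimately show ?thesis by linarith
qed

lemma om_sum: assumes "0 \<le> s" "s \<le> t" "t \<le> 1"
  shows "omega hA s t + omega hB s t = t - s"
proof -
  have "omega hA s t + omega hB s t = integral {s..t} (\<lambda>x. hA x + hB x)"
    unfolding omega_def by (rule integral_add[symmetric]) (auto simp: good_int good_hA good_hB)
  also have "\<dots> = integral {s..t} (\<lambda>_. 1::real)"
    by (rule integral_spike[of "{s}"]) (use assms hAB_sum in auto)
  finally show ?thesis using assms by simp
qed

lemma om_level:
  fixes m :: nat
  assumes "exp (-real m - 1) \<le> x" "x \<le> y" "y \<le> exp (-real m)"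
  shows "omega hA x y = (if even m then y - x else 0)" "omega hB x y = (if odd m then y - x else 0)"
proof -
  have A: "hA t = (if even m then 1 else 0)" "hB t = (if odd m then 1 else 0)" if "t \<in> {x..y} - {x}" for t
    using hA_level[of m t] hB_level[of m t] that assms by auto
  have "omega hA x y = integral {x..y} (\<lambda>_. if even m then 1 else 0::real)"
    unfolding omega_def by (rule integral_spike[of "{x}"]) (use A in auto)
  thus "omega hA x y = (if even m then y - x else 0)" using assms by simp
  have "omega hB x y = integral {x..y} (\<lambda>_. if odd m then 1 else 0::real)"
    unfolding omega_def by (rule integral_spike[of "{x}"]) (use A in auto)
  thus "omega hB x y = (if odd m then y - x else 0)" using assms by simp
qed

lemma om_cont1: "good h \<Longrightarrow> continuous_on {s..b} (\<lambda>t. omega h s t)"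
  unfolding omega_def by (rule indefinite_integral_continuous_1) (simp add: good_int)

lemma om_cont2: "good h \<Longrightarrow> continuous_on {a..t} (\<lambda>s. omega h s t)"
  unfolding omega_def by (rule indefinite_integral_continuous_1') (simp add: good_int)

lemma om_hC: "omega hC s t = 0"
  unfolding omega_def hC_def by simp

abbreviation "D \<equiv> detOmega hA hB hC"
abbreviation "w1 \<equiv> omega hA"
abbreviation "w2 \<equiv> omega hB"

lemma D_eq: "D s t = w1 s t * w2 s t"
  unfolding detOmega_def om_hC by simp

lemma D_nonneg: "0 \<le> D s t"
  unfolding D_eq using om_nonneg good_hA good_hB by simp

lemma D_mono: "s1 \<le> s2 \<Longrightarrow> s2 \<le> t2 \<Longrightarrow> t2 \<le> t1 \<Longrightarrow> D s2 t2 \<le> D s1 t1"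
  unfolding D_eq
  by (intro mult_mono om_mono good_hA good_hB om_nonneg) auto

lemma D_strict:
  assumes "0 \<le> s1" "s1 \<le> s2" "s2 \<le> t2" "t2 \<le> t1" "t1 \<le> 1" "s1 < s2 \<or> t2 < t1" "0 < D s2 t2"
  shows "D s2 t2 < D s1 t1"
proof -
  let ?a = "w1 s1 t1" and ?b = "w2 s1 t1" and ?a' = "w1 s2 t2" and ?b' = "w2 s2 t2"
  have "?a' \<le> ?a" "?b' \<le> ?b" using assms by (auto intro!: om_mono good_hA good_hB)
  moreover have "?a + ?b = t1 - s1" "?a' + ?b' = t2 - s2" using assms by (auto intro!: om_sum)
  moreover have "0 \<le> ?a'" "0 \<le> ?b'" using om_nonneg good_hA good_hB by auto
  moreover have "0 < ?a' * ?b'" using assms(7) D_eq by simp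
  ultimately have pos: "0 < ?a'" "0 < ?b'"
    by (auto simp: zero_less_mult_iff)
  have or: "?a' < ?a \<or> ?b' < ?b"
  proof (rule ccontr)
    assume "\<not> (?a' < ?a \<or> ?b' < ?b)"
    hence "?a \<le> ?a'" "?b \<le> ?b'" by auto
    moreover have "t2 - s2 < t1 - s1" using assms(6) assms(2,4) by auto
    ultimately show False
      using \<open>?a + ?b = t1 - s1\<close> \<open>?a' + ?b' = t2 - s2\<close> by linarith
  qed
  have "?a' * ?b' < ?a * ?b"
  proof (cases "?a' < ?a")
    case True
    have "?a' * ?b' < ?a * ?b'" using True pos by simp
    also have "\<dots> \<le> ?a * ?b" using \<open>?b' \<le> ?b\<close> \<open>?a' \<le> ?a\<close> pos by (intro mult_left_mono) auto
    finally show ?thesis .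
  next
    case False
    hence "?b' < ?b" using or by simp
    have "?a' * ?b' < ?a' * ?b" using \<open>?b' < ?b\<close> pos by simp
    also have "\<dots> \<le> ?a * ?b" using \<open>?b' < ?b\<close> \<open>?a' \<le> ?a\<close> pos by (intro mult_right_mono) auto
    finally show ?thesis .
  qed
  thus ?thesis unfolding D_eq .
qed

lemma D_le_sq: assumes "0 \<le> s" "s \<le> t" "t \<le> 1" shows "D s t \<le> (t - s)^2 / 4"
proof -
  have "w1 s t + w2 s t = t - s" using assms om_sum by auto
  moreover have "(w1 s t + w2 s t)^2 - 4 * (w1 s t * w2 s t) = (w1 s t - w2 s t)^2"
    by (simp add: power2_eq_square algebra_simps)
  moreover have "0 \<le> (w1 s t - w2 s t)^2" by simp
  moreover have "(w1 s t + w2 s t)^2 = (t - s)^2" using calculation(1) by simp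
  ultimately show ?thesis unfolding D_eq by linarith
qed

lemma D_cont1: "continuous_on {s..b} (\<lambda>t. D s t)"
  unfolding D_eq by (intro continuous_intros om_cont1 good_hA good_hB)

lemma D_cont2: "continuous_on {a..t} (\<lambda>s. D s t)"
  unfolding D_eq by (intro continuous_intros om_cont2 good_hA good_hB)

lemma D_two:
  fixes k :: nat
  assumes "0 \<le> x" "x \<le> exp (-real k - 2)" "exp (-real k) \<le> y" "y \<le> 1"
  shows "exp (-2 * real k - 3) \<le> D x y"
proof -
  define p where "p = exp (-real k - 2)"
  define q where "q = exp (-real k - 1)"
  define u where "u = exp (-real k)"
  have qp: "q = exp 1 * p" unfolding p_def q_def by (simp add: mult_exp_exp)
  have uq: "u = exp 1 * q" unfolding u_def q_def by (simp add: mult_exp_exp)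
  have pp: "0 < p" unfolding p_def by simp
  have e2: "2 \<le> exp (1::real)" using exp_ge_add_one_self[of 1] by simp
  have pq: "p \<le> q" "q \<le> u" using qp uq pp e2 by auto
  have l1: "w1 p q = (if even (k+1) then q - p else 0)" "w2 p q = (if odd (k+1) then q - p else 0)"
  proof -
    have "-real (k+1) - 1 = -real k - 2" "-real (k+1) = -real k - 1" by simp_all
    hence "exp (-real (k+1) - 1) = p" "exp (-real (k+1)) = q" unfolding p_def q_def by simp_all
    thus "w1 p q = (if even (k+1) then q - p else 0)" "w2 p q = (if odd (k+1) then q - p else 0)"
      using om_level[of "k+1" p q] pq by auto
  qed
  have l2: "w1 q u = (if even k then u - q else 0)" "w2 q u = (if odd k then u - q else 0)"
    using om_level[of "k" q u] pq unfolding u_def q_def by auto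
  have xy: "x \<le> p" "u \<le> y" using assms unfolding p_def u_def by auto
  have m1: "w1 p u \<le> w1 x y" "w2 p u \<le> w2 x y"
    using xy pq by (auto intro!: om_mono good_hA good_hB)
  have s1: "w1 p u = w1 p q + w1 q u" "w2 p u = w2 p q + w2 q u"
    using pq by (auto intro!: om_add good_hA good_hB)
  have n: "0 \<le> w1 p q" "0 \<le> w1 q u" "0 \<le> w2 p q" "0 \<le> w2 q u"
    using om_nonneg good_hA good_hB by auto
  have "u - q \<le> w1 x y \<and> q - p \<le> w2 x y \<or> q - p \<le> w1 x y \<and> u - q \<le> w2 x y"
    using m1 s1 n l1 l2 by (cases "even k") auto
  hence "(u - q) * (q - p) \<le> w1 x y * w2 x y"
  proof (elim disjE conjE)
    assume "u - q \<le> w1 x y" "q - p \<le> w2 x y"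
    thus ?thesis using pq by (intro mult_mono) auto
  next
    assume "q - p \<le> w1 x y" "u - q \<le> w2 x y"
    hence "(q - p) * (u - q) \<le> w1 x y * w2 x y" using pq by (intro mult_mono) auto
    thus ?thesis by (simp add: mult.commute)
  qed
  moreover have "(u - q) * (q - p) = exp 1 * p^2 * (exp 1 - 1)^2"
    using qp uq by (simp add: power2_eq_square algebra_simps)
  moreover have "exp 1 * p^2 = exp (-2 * real k - 3)"
    unfolding p_def by (simp add: power2_eq_square mult_exp_exp)
  moreover have "1 \<le> (exp (1::real) - 1)^2"
  proof -
    have "1 \<le> exp (1::real) - 1" using e2 by simp
    hence "1 * 1 \<le> (exp (1::real) - 1) * (exp 1 - 1)" by (intro mult_mono) auto
    thus ?thesis by (simp add: power2_eq_square)
  qed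
  ultimately show ?thesis unfolding D_eq
    by (smt (verit, ccfv_SIG) exp_gt_zero mult_le_cancel_left1)
qed

lemma lev_mono: assumes "0 < x" "x \<le> y" "y \<le> 1" shows "lev y \<le> lev x"
  unfolding lev_def using assms by (intro nat_mono floor_mono) simp

lemma D_single: assumes "0 < x" "x \<le> y" "y \<le> 1" "lev x = lev y" shows "D x y = 0"
proof -
  have "exp (-real (lev x) - 1) < x" "y \<le> exp (-real (lev x))"
    using lev_prop[of x] lev_prop[of y] assms by auto
  from om_level[OF less_imp_le[OF this(1)] assms(2) this(2)] show ?thesis
    unfolding D_eq by auto
qed

lemma lev_less: assumes "0 < x" "x \<le> y" "y \<le> 1" "0 < D x y" shows "lev y < lev x"
  using lev_mono[OF assms(1-3)] D_single[OF assms(1-3)] assms(4) by fastforce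

lemma D_lower_sq: assumes "0 < t" "t \<le> 1" shows "t^2 * exp (-5) \<le> D 0 t"
proof -
  let ?k = "lev t + 1"
  have a: "exp (-real (lev t) - 1) < t" "t \<le> exp (-real (lev t))" using lev_prop assms by auto
  have e: "-real ?k = -real (lev t) - 1" by simp
  have "exp (-real ?k) \<le> t" unfolding e using a by simp
  moreover have "0 \<le> exp (-real ?k - 2)" by simp
  ultimately have "exp (-2 * real ?k - 3) \<le> D 0 t"
    using assms by (intro D_two) auto
  moreover have "exp (-2 * real ?k - 3) = (exp (-real (lev t)))^2 * exp (-5)"
    by (simp add: power2_eq_square mult_exp_exp algebra_simps)
  moreover have "t^2 \<le> (exp (-real (lev t)))^2" using a assms by (intro power_mono) auto
  ultimately show ?thesis by (smt (verit) exp_gt_zero mult_right_mono)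
qed

lemma int_inv:
  fixes a p q :: real
  assumes "0 < p" "p \<le> q"
  shows "((\<lambda>t. 1 / (t - a)) has_integral (ln q - ln p)) {a+p..a+q}"
proof -
  have "((\<lambda>t. 1 / (t - a)) has_integral ((\<lambda>t. ln (t - a)) (a+q) - (\<lambda>t. ln (t - a)) (a+p))) {a+p..a+q}"
  proof (rule fundamental_theorem_of_calculus[where f="\<lambda>t. ln (t - a)"])
    show "a + p \<le> a + q" using assms by simp
    fix x assume x: "x \<in> {a+p..a+q}"
    hence "0 < x - a" using assms by auto
    hence "((\<lambda>t. ln (t - a)) has_real_derivative 1 / (x - a)) (at x within {a+p..a+q})"
      by (auto intro!: derivative_eq_intros)
    thus "((\<lambda>t. ln (t - a)) has_vector_derivative 1 / (x - a)) (at x within {a+p..a+q})"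
      by (simp add: has_real_derivative_iff_has_vector_derivative)
  qed
  thus ?thesis by simp
qed

lemma int_psi:
  fixes c a :: real
  assumes "1 \<le> c"
  shows "((\<lambda>t. min c (1 / (t - a))) has_integral (1 + ln c)) {a..a+1}"
proof -
  have c0: "0 < c" using assms by simp
  have i1: "((\<lambda>t. min c (1 / (t - a))) has_integral 1) {a..a + 1/c}"
  proof (rule has_integral_spike[of "{a}"])
    show "negligible {a}" by simp
    show "min c (1 / (t - a)) = c" if "t \<in> {a..a + 1/c} - {a}" for t
    proof -
      have "0 < t - a" "t - a \<le> 1/c" using that by auto
      hence "c \<le> 1 / (t - a)" using c0 by (simp add: field_simps)
      thus ?thesis by simp
    qed
    have "((\<lambda>t. c) has_integral c * ((a + 1/c) - a)) {a..a + 1/c}"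
      using has_integral_const_real[of c a "a + 1/c"] c0 by simp
    thus "((\<lambda>t. c) has_integral 1) {a..a + 1/c}" using c0 by simp
  qed
  have i2: "((\<lambda>t. min c (1 / (t - a))) has_integral (ln 1 - ln (1/c))) {a + 1/c..a + 1}"
  proof (rule has_integral_eq[OF _ int_inv])
    show "1 / (t - a) = min c (1 / (t - a))" if "t \<in> {a + 1/c..a + 1}" for t
    proof -
      have "1/c \<le> t - a" "0 < 1/c" using that c0 by auto
      hence tp: "0 < t - a" by linarith
      have "1 \<le> c * (t - a)" using \<open>1/c \<le> t - a\<close> c0 by (simp add: field_simps)
      hence "1 / (t - a) \<le> c" using tp by (simp add: divide_le_eq)
      thus ?thesis by simp
    qed
    show "0 < 1/c" using c0 by simp
    show "1/c \<le> 1" using assms by simp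
  qed
  have "((\<lambda>t. min c (1 / (t - a))) has_integral (1 + (ln 1 - ln (1/c)))) {a..a+1}"
    by (rule has_integral_combine[OF _ _ i1 i2]) (use assms c0 in auto)
  thus ?thesis using c0 by (simp add: ln_div)
qed

lemma D_refl: "D x x = 0"
proof -
  have "w1 x x = 0" using om_le[OF good_hA, of x x] om_nonneg[OF good_hA, of x x] by simp
  thus ?thesis unfolding D_eq by simp
qed

lemma D_inj2:
  assumes "0 \<le> s" "s \<le> t1" "t1 \<le> 1" "s \<le> t2" "t2 \<le> 1" "D s t1 = e" "D s t2 = e" "0 < e"
  shows "t1 = t2"
proof (rule ccontr)
  assume "t1 \<noteq> t2"
  hence "t1 < t2 \<or> t2 < t1" by auto
  thus False
  proof
    assume "t1 < t2" thus False using D_strict[of s s t1 t2] assms by auto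
  next
    assume "t2 < t1" thus False using D_strict[of s s t2 t1] assms by auto
  qed
qed

lemma D_inj1:
  assumes "0 \<le> s1" "s1 \<le> t" "0 \<le> s2" "s2 \<le> t" "t \<le> 1" "D s1 t = e" "D s2 t = e" "0 < e"
  shows "s1 = s2"
proof (rule ccontr)
  assume "s1 \<noteq> s2"
  hence "s1 < s2 \<or> s2 < s1" by auto
  thus False
  proof
    assume "s1 < s2" thus False using D_strict[of s1 s2 t t] assms by auto
  next
    assume "s2 < s1" thus False using D_strict[of s2 s1 t t] assms by auto
  qed
qed

lemma D01: "exp (-3) \<le> D 0 1"
  using D_two[of 0 0 1] by simp

locale rc =
  fixes r :: real
  assumes rbig: "exp 16 \<le> r"
begin

definition eps :: real where "eps = 1 / r^2"

lemma rpos: "0 < r" using rbig by (smt (verit) exp_gt_zero)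
lemma lnr: "16 \<le> ln r" using rbig rpos by (metis exp_le_cancel_iff exp_ln)
lemma eps_pos: "0 < eps" unfolding eps_def using rpos by simp

lemma r2: "exp 32 \<le> r^2"
proof -
  have "(exp 16)^2 \<le> r^2" using rbig by (intro power_mono) auto
  moreover have "(exp 16)^2 = exp (32::real)" by (simp add: power2_eq_square mult_exp_exp)
  ultimately show ?thesis by simp
qed

lemma eps_small: "eps < D 0 1"
proof -
  have "eps \<le> 1 / exp 32" unfolding eps_def using r2 rpos by (intro divide_left_mono) auto
  also have "\<dots> = exp (-32)" by (simp add: exp_minus divide_inverse)
  also have "\<dots> < exp (-3)" by simp
  finally show ?thesis using D01 by simp
qed

definition th :: real where "th = that hA hB hC r"

lemma th_ex1: "\<exists>!t. 0 \<le> t \<and> t \<le> 1 \<and> D 0 t = eps"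
proof -
  obtain t where t: "0 \<le> t" "t \<le> 1" "D 0 t = eps"
    using IVT'[of "\<lambda>t. D 0 t" 0 eps 1] D_refl eps_pos eps_small D_cont1[of 0 1] by force
  moreover have "t' = t" if "0 \<le> t' \<and> t' \<le> 1 \<and> D 0 t' = eps" for t'
    using D_inj2[of 0 t' t eps] that t eps_pos by auto
  ultimately show ?thesis by blast
qed

lemma th_prop: "0 \<le> th" "th \<le> 1" "D 0 th = eps"
proof -
  have "0 \<le> th \<and> th \<le> 1 \<and> D 0 th = eps"
    unfolding th_def that_def eps_def[symmetric] by (rule theI'[OF th_ex1])
  thus "0 \<le> th" "th \<le> 1" "D 0 th = eps" by auto
qed

lemma th_unique: "0 \<le> t \<Longrightarrow> t \<le> 1 \<Longrightarrow> D 0 t = eps \<Longrightarrow> t = th"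
  using th_ex1 th_prop by blast

lemma th_pos: "0 < th"
  using th_prop D_refl[of 0] eps_pos by (metis order.order_iff_strict less_irrefl)

lemma th_lower: "2 / r \<le> th"
proof -
  have "eps \<le> th^2 / 4" using D_le_sq[of 0 th] th_prop by simp
  hence "4 / r^2 \<le> th^2" unfolding eps_def by simp
  hence "(2 / r)^2 \<le> th^2" by (simp add: power_divide)
  thus ?thesis by (rule power2_le_imp_le) (use th_pos in auto)
qed

lemma th_upper: "th^2 * r^2 \<le> exp 5"
proof -
  have "th^2 * exp (-5) \<le> eps" using D_lower_sq[of th] th_prop th_pos by simp
  hence "th^2 * exp (-5) * r^2 \<le> 1" unfolding eps_def using rpos by (simp add: field_simps)
  hence "(th^2 * r^2 * exp (-5)) * exp 5 \<le> 1 * exp 5" by (intro mult_right_mono) (auto simp: algebra_simps)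
  moreover have "th^2 * r^2 = (th^2 * r^2 * exp (-5)) * exp 5" by (simp add: mult_exp_exp)
  ultimately show ?thesis by simp
qed

lemma ge_th: assumes "0 \<le> t" "t \<le> 1" "eps \<le> D 0 t" shows "th \<le> t"
proof (rule ccontr)
  assume "\<not> th \<le> t"
  hence "D 0 t < D 0 th" using D_strict[of 0 0 t th] assms th_prop eps_pos by auto
  thus False using th_prop assms by simp
qed

lemma th_le: assumes "th \<le> t" shows "eps \<le> D 0 t"
  using D_mono[of 0 0 th t] assms th_prop by simp

definition Sh :: "real \<Rightarrow> real" where "Sh t = shat hA hB hC t r"

lemma sh_ex1: assumes "th \<le> t" "t \<le> 1" shows "\<exists>!s. 0 \<le> s \<and> s \<le> t \<and> D s t = eps"
proof -
  have t0: "0 \<le> t" using assms th_prop by linarith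
  have "\<exists>s. 0 \<le> s \<and> s \<le> t \<and> D s t = eps"
    by (rule IVT2'[of "\<lambda>s. D s t"]) (use D_refl[of t] eps_pos th_le[OF assms(1)] D_cont2[of 0 t] t0 in auto)
  then obtain s where s: "0 \<le> s" "s \<le> t" "D s t = eps" by blast
  moreover have "s' = s" if "0 \<le> s' \<and> s' \<le> t \<and> D s' t = eps" for s'
    using D_inj1[of s' t s eps] that s eps_pos assms by auto
  ultimately show ?thesis by blast
qed

lemma sh_prop: assumes "th \<le> t" "t \<le> 1" shows "0 \<le> Sh t" "Sh t \<le> t" "D (Sh t) t = eps"
proof -
  have "0 \<le> Sh t \<and> Sh t \<le> t \<and> D (Sh t) t = eps"
    unfolding Sh_def shat_def eps_def[symmetric] by (rule theI'[OF sh_ex1[OF assms]])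
  thus "0 \<le> Sh t" "Sh t \<le> t" "D (Sh t) t = eps" by auto
qed

lemma sh_unique: assumes "th \<le> t" "t \<le> 1" "0 \<le> s" "s \<le> t" "D s t = eps" shows "s = Sh t"
  using sh_ex1[OF assms(1,2)] sh_prop[OF assms(1,2)] assms(3-5) by blast

lemma sh_mono: assumes "th \<le> t1" "t1 \<le> t2" "t2 \<le> 1" shows "Sh t1 \<le> Sh t2"
proof (rule ccontr)
  assume c: "\<not> Sh t1 \<le> Sh t2"
  note p1 = sh_prop[of t1] and p2 = sh_prop[of t2]
  have a: "eps \<le> D (Sh t2) t1" using D_mono[of "Sh t2" "Sh t1" t1 t1] p1 c assms by auto
  have b: "D (Sh t2) t1 \<le> eps" using D_mono[of "Sh t2" "Sh t2" t1 t2] p2 c assms p1 by auto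
  have "Sh t2 = Sh t1"
    using sh_unique[of t1 "Sh t2"] a b p1 p2 c assms by force
  thus False using c by simp
qed

lemma sh_w: assumes "th \<le> t" "t \<le> 1"
  shows "w1 (Sh t) t * w2 (Sh t) t = eps" "eps \<le> w1 (Sh t) t" "0 < w1 (Sh t) t"
proof -
  note p = sh_prop[OF assms]
  show e: "w1 (Sh t) t * w2 (Sh t) t = eps" using p D_eq by simp
  have "w2 (Sh t) t \<le> 1" using om_le[OF good_hB, of "Sh t" t] p assms by simp
  moreover have "0 \<le> w1 (Sh t) t" "0 \<le> w2 (Sh t) t" using om_nonneg good_hA good_hB by auto
  ultimately have "w1 (Sh t) t * w2 (Sh t) t \<le> w1 (Sh t) t"
    by (simp add: mult_left_le)
  thus "eps \<le> w1 (Sh t) t" using e by simp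
  thus "0 < w1 (Sh t) t" using eps_pos by simp
qed

abbreviation sg :: "nat \<Rightarrow> real" where "sg \<equiv> sigma hA hB hC r"

lemma step_ex1: assumes "0 \<le> x" "x \<le> 1" "eps < D x 1"
  shows "\<exists>!s. x < s \<and> s < 1 \<and> D x s = eps"
proof -
  obtain s where s: "x \<le> s" "s \<le> 1" "D x s = eps"
    using IVT'[of "\<lambda>s. D x s" x eps 1] D_refl[of x] eps_pos assms D_cont1[of x 1] by force
  have "s \<noteq> x" using s D_refl[of x] eps_pos by auto
  moreover have "s \<noteq> 1" using s assms by auto
  ultimately have s': "x < s" "s < 1" "D x s = eps" using s by auto
  moreover have "s' = s" if "x < s' \<and> s' < 1 \<and> D x s' = eps" for s'
    using D_inj2[of x s' s eps] that s' eps_pos assms by auto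
  ultimately show ?thesis by blast
qed

lemma sg_range: "0 \<le> sg j \<and> sg j \<le> 1"
proof (induction j)
  case 0 thus ?case by simp
next
  case (Suc j)
  show ?case
  proof (cases "eps < D (sg j) 1")
    case True
    have eq: "sg (Suc j) = (THE s. sg j < s \<and> s < 1 \<and> D (sg j) s = eps)"
      using True by (simp add: eps_def[symmetric])
    have "sg j < sg (Suc j) \<and> sg (Suc j) < 1 \<and> D (sg j) (sg (Suc j)) = eps"
      unfolding eq by (rule theI'[OF step_ex1]) (use Suc True in auto)
    thus ?thesis using Suc by auto
  next
    case False thus ?thesis by (simp add: eps_def[symmetric])
  qed
qed

lemma sg_step: assumes "eps < D (sg j) 1"
  shows "sg j < sg (Suc j)" "sg (Suc j) < 1" "D (sg j) (sg (Suc j)) = eps"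
proof -
  have eq: "sg (Suc j) = (THE s. sg j < s \<and> s < 1 \<and> D (sg j) s = eps)"
    using assms by (simp add: eps_def[symmetric])
  have "sg j < sg (Suc j) \<and> sg (Suc j) < 1 \<and> D (sg j) (sg (Suc j)) = eps"
    unfolding eq by (rule theI'[OF step_ex1]) (use sg_range[of j] assms in auto)
  thus "sg j < sg (Suc j)" "sg (Suc j) < 1" "D (sg j) (sg (Suc j)) = eps" by auto
qed

lemma sg_stop: "\<not> eps < D (sg j) 1 \<Longrightarrow> sg (Suc j) = 1"
  by (simp add: eps_def[symmetric])

lemma sg_le_Suc: "sg j \<le> sg (Suc j)"
  using sg_step sg_stop sg_range by (cases "eps < D (sg j) 1") (auto simp: less_imp_le)

lemma sg1: "sg 1 = th"
proof -
  have "eps < D (sg 0) 1" using eps_small by simp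
  from sg_step[OF this] show ?thesis by (intro th_unique) auto
qed

lemma sg_ge_th: "1 \<le> j \<Longrightarrow> th \<le> sg j"
proof (induction j)
  case 0 thus ?case by simp
next
  case (Suc j)
  show ?case
  proof (cases "j = 0")
    case True thus ?thesis using sg1 by simp
  next
    case False thus ?thesis using Suc sg_le_Suc[of j] by auto
  qed
qed

declare sigma.simps[simp del]

lemma sg_pos: "1 \<le> j \<Longrightarrow> 0 < sg j"
  using sg_ge_th th_pos by force

lemma kappa_aux: "1 \<le> j \<Longrightarrow> sg j < 1 \<Longrightarrow> lev (sg j) + j \<le> lev th + 1"
proof (induction j)
  case 0 thus ?case by simp
next
  case (Suc j)
  show ?case
  proof (cases "j = 0")
    case True thus ?thesis using sg1 by simp
  next
    case False
    have c: "eps < D (sg j) 1" using sg_stop[of j] Suc.prems by force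
    note st = sg_step[OF c]
    have "lev (sg (Suc j)) < lev (sg j)"
      using lev_less[of "sg j" "sg (Suc j)"] st sg_pos[of j] False eps_pos by auto
    moreover have "lev (sg j) + j \<le> lev th + 1" using Suc.IH False st by auto
    ultimately show ?thesis by simp
  qed
qed

lemma lev_th_le: "real (lev th) \<le> ln r"
proof -
  have "0 \<le> - ln th" using th_prop th_pos by simp
  hence "real (lev th) \<le> - ln th" unfolding lev_def by linarith
  also have "- ln th \<le> - ln (2 / r)" using th_lower rpos th_pos by (subst neg_le_iff_le, subst ln_le_cancel_iff) auto
  also have "\<dots> = ln r - ln 2" using rpos by (simp add: ln_div)
  also have "\<dots> \<le> ln r" by simp
  finally show ?thesis .
qed

lemma sgJ: "sg (lev th + 2) = 1"
proof (rule ccontr)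
  assume "sg (lev th + 2) \<noteq> 1"
  hence "sg (lev th + 2) < 1" using sg_range[of "lev th + 2"] by auto
  from kappa_aux[OF _ this] show False by simp
qed

definition ka :: nat where "ka = kappa hA hB hC r"

lemma ka_prop: "0 < ka" "sg ka = 1" "ka \<le> lev th + 2"
proof -
  have ex: "0 < lev th + 2 \<and> sg (lev th + 2) = 1" using sgJ by simp
  have "0 < ka \<and> sg ka = 1" unfolding ka_def kappa_def by (rule LeastI[of "\<lambda>j. 0 < j \<and> sg j = 1", OF ex])
  thus "0 < ka" "sg ka = 1" by auto
  show "ka \<le> lev th + 2" unfolding ka_def kappa_def by (rule Least_le[of "\<lambda>j. 0 < j \<and> sg j = 1", OF ex])
qed

lemma ka_upper: "real ka \<le> 2 * ln r"
  using ka_prop(3) lev_th_le lnr by linarith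

lemma lev_step: assumes "1 \<le> j" shows "int (lev (sg j)) - 2 \<le> int (lev (sg (Suc j)))"
proof (cases "lev (sg j) \<le> 2")
  case True thus ?thesis by simp
next
  case False
  define x where "x = sg j"
  define k where "k = lev x"
  have k3: "3 \<le> k" using False unfolding k_def x_def by simp
  have x0: "0 < x" "x \<le> 1" "th \<le> x" using sg_pos[OF assms] sg_range[of j] sg_ge_th[OF assms] unfolding x_def by auto
  have xk: "x \<le> exp (-real k)" using lev_prop[OF x0(1,2)] unfolding k_def by simp
  define y where "y = exp (-real (k-2))"
  have rk: "real (k - 2) = real k - 2" using k3 by simp
  have "exp (-2 * real (k-2) - 3) \<le> D x y"
    by (rule D_two) (use x0 xk rk in \<open>auto simp: y_def\<close>)
  moreover have "exp (-2 * real (k-2) - 3) = exp 1 * (exp (-real k))^2"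
    using rk by (simp add: power2_eq_square mult_exp_exp algebra_simps)
  moreover have "x^2 \<le> (exp (-real k))^2" using xk x0 by (intro power_mono) auto
  moreover have "(2/r)^2 \<le> x^2" using th_lower x0 rpos by (intro power_mono) auto
  moreover have "eps < (2/r)^2"
  proof -
    have "eps < 4 / r^2" unfolding eps_def using rpos by (intro divide_strict_right_mono) auto
    thus ?thesis by (simp add: power_divide)
  qed
  moreover have "(exp (-real k))^2 \<le> exp 1 * (exp (-real k))^2" by simp
  ultimately have Dxy: "eps < D x y" by linarith
  have y1: "y < 1" unfolding y_def using k3 by simp
  have "exp (-real k) \<le> y" unfolding y_def using rk by simp
  hence xy: "x \<le> y" using xk by linarith
  have "D x y < D x 1" using D_strict[of x x y 1] x0 xy y1 Dxy eps_pos by auto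
  hence c: "eps < D (sg j) 1" using Dxy unfolding x_def by simp
  note st = sg_step[OF c]
  have sy: "sg (Suc j) \<le> y"
  proof (rule ccontr)
    assume "\<not> sg (Suc j) \<le> y"
    hence "D x y < D x (sg (Suc j))" using D_strict[of x x y "sg (Suc j)"] x0 xy st Dxy eps_pos x_def by auto
    thus False using st Dxy x_def by simp
  qed
  have sp: "0 < sg (Suc j)" using st x0 x_def by simp
  have "ln (sg (Suc j)) \<le> ln y" using sy sp unfolding y_def by (subst ln_le_cancel_iff) auto
  hence "real (k - 2) \<le> - ln (sg (Suc j))" unfolding y_def by simp
  hence "int (k - 2) \<le> \<lfloor>- ln (sg (Suc j))\<rfloor>" by (simp add: le_floor_iff)
  moreover have "ln (sg (Suc j)) \<le> 0" using st(2) sp by simp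
  ultimately have "int (k - 2) \<le> int (lev (sg (Suc j)))" unfolding lev_def by simp
  thus ?thesis using k3 unfolding k_def x_def by simp
qed

lemma lev_chain: "1 \<le> j \<Longrightarrow> int (lev th) \<le> int (lev (sg j)) + 2 * (int j - 1)"
proof (induction j)
  case 0 thus ?case by simp
next
  case (Suc j)
  show ?case
  proof (cases "j = 0")
    case True thus ?thesis using sg1 by simp
  next
    case False
    thus ?thesis using Suc.IH lev_step[of j] by force
  qed
qed

lemma lev_th_ge: "ln r - 7/2 \<le> real (lev th)"
proof -
  have "ln (th^2 * r^2) \<le> ln (exp 5)" using th_upper th_pos rpos by (subst ln_le_cancel_iff) auto
  hence "2 * ln th + 2 * ln r \<le> 5" using th_pos rpos by (simp add: ln_mult ln_realpow)
  moreover have "0 \<le> - ln th" using th_prop th_pos by simp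
  moreover hence "- ln th - 1 \<le> real (lev th)" unfolding lev_def by linarith
  ultimately show ?thesis by linarith
qed

lemma ka_lower: "ln r / 4 \<le> real ka"
proof -
  have "1 \<le> ka" using ka_prop by simp
  from lev_chain[OF this] have "int (lev th) \<le> int (lev (sg ka)) + 2 * (int ka - 1)" .
  moreover have "lev (sg ka) = 0" using ka_prop unfolding lev_def by simp
  ultimately have "int (lev th) + 2 \<le> 2 * int ka" by simp
  hence "real_of_int (int (lev th) + 2) \<le> real_of_int (2 * int ka)" by (simp only: of_int_le_iff)
  hence "real (lev th) + 2 \<le> 2 * real ka" by simp
  thus ?thesis using lev_th_ge lnr by linarith
qed

abbreviation K :: "real \<Rightarrow> real" where "K t \<equiv> KH hA hB hC t r"

lemma th_eq: "that hA hB hC r = th" unfolding th_def ..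

lemma K1: assumes "0 \<le> t" "t < th" shows "K t = r^2 * w2 0 t * hA t"
  using assms rpos unfolding KH_def th_eq om_hC by (simp add: field_simps)

lemma K2: assumes "th \<le> t" "t < 1" shows "K t = hA t / w1 (Sh t) t"
  using assms unfolding KH_def th_eq Sh_def by simp

lemma K3: "K 1 = 0"
  using th_prop unfolding KH_def th_eq by simp

lemma K_cases: assumes "0 \<le> t" "t \<le> 1"
  obtains "t < th" "K t = r^2 * w2 0 t * hA t" | "th \<le> t" "t < 1" "K t = hA t / w1 (Sh t) t" | "t = 1" "K t = 0"
  using K1 K2 K3 assms by (metis linorder_not_le order_le_less)

lemma K_nonneg: assumes "0 \<le> t" "t \<le> 1" shows "0 \<le> K t"
  using assms
proof (cases rule: K_cases)
  case 1 thus ?thesis using om_nonneg[OF good_hB] good_hA unfolding good_def by simp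
next
  case 2 thus ?thesis using om_nonneg[OF good_hA] good_hA unfolding good_def by simp
qed simp

lemma K_le_r2: assumes "0 \<le> t" "t \<le> 1" shows "K t \<le> r^2"
  using assms
proof (cases rule: K_cases)
  case 1
  have "w2 0 t \<le> 1" using om_le[OF good_hB, of 0 t] assms by simp
  moreover have "0 \<le> w2 0 t" "0 \<le> hA t" "hA t \<le> 1" using om_nonneg[OF good_hB] good_hA unfolding good_def by auto
  ultimately have "w2 0 t * hA t \<le> 1" by (simp add: mult_le_one)
  hence "r^2 * (w2 0 t * hA t) \<le> r^2 * 1" by (intro mult_left_mono) auto
  thus ?thesis using 1 by (simp add: algebra_simps)
next
  case 2
  note sw = sh_w[OF 2(1) assms(2)]
  have "hA t \<le> 1" "0 \<le> hA t" using good_hA unfolding good_def by auto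
  hence "hA t / w1 (Sh t) t \<le> 1 / w1 (Sh t) t" using sw by (intro divide_right_mono) auto
  also have "\<dots> \<le> 1 / eps" using sw eps_pos by (intro divide_left_mono) auto
  also have "\<dots> = r^2" unfolding eps_def by simp
  finally show ?thesis using 2 by simp
qed simp

definition W1c :: "real \<Rightarrow> real" where "W1c t = w1 0 (max 0 (min t 1))"
definition W2c :: "real \<Rightarrow> real" where "W2c t = w2 0 (max 0 (min t 1))"
definition Sc :: "real \<Rightarrow> real" where "Sc t = Sh (max th (min t 1))"

lemma W_meas: "W1c \<in> borel_measurable borel" "W2c \<in> borel_measurable borel"
proof -
  have cl: "continuous_on UNIV (\<lambda>t::real. max 0 (min t 1))" by (intro continuous_intros)
  have im: "(\<lambda>t::real. max 0 (min t 1)) ` UNIV \<subseteq> {0..1}" by auto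
  have "continuous_on UNIV W1c" unfolding W1c_def
    by (rule continuous_on_compose2[OF om_cont1[OF good_hA] cl im])
  thus "W1c \<in> borel_measurable borel" by (rule borel_measurable_continuous_onI)
  have "continuous_on UNIV W2c" unfolding W2c_def
    by (rule continuous_on_compose2[OF om_cont1[OF good_hB] cl im])
  thus "W2c \<in> borel_measurable borel" by (rule borel_measurable_continuous_onI)
qed

lemma Sc_meas: "Sc \<in> borel_measurable borel"
proof (rule borel_measurable_mono)
  show "mono Sc" unfolding mono_def Sc_def
  proof (intro allI impI)
    fix x y :: real assume "x \<le> y"
    thus "Sh (max th (min x 1)) \<le> Sh (max th (min y 1))"
      using th_prop by (intro sh_mono) auto
  qed
qed

definition K' :: "real \<Rightarrow> real" where
  "K' t = (if t < th then r^2 * W2c t * hA t else if t < 1 then hA t / (W1c t - W1c (Sc t)) else 0)"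

lemma K'_meas: "K' \<in> borel_measurable borel"
proof -
  note [measurable] = W_meas Sc_meas
  have hm [measurable]: "hA \<in> borel_measurable borel" using good_hA good_def by blast
  show ?thesis unfolding K'_def
    apply (intro measurable_If)
        apply (auto simp del: space_borel)
     apply measurable
    done
qed

lemma K_eq_K': assumes "0 \<le> t" "t \<le> 1" shows "K t = K' t"
  using assms
proof (cases rule: K_cases)
  case 1 thus ?thesis unfolding K'_def W2c_def using assms by simp
next
  case 2
  note sp = sh_prop[OF 2(1) assms(2)]
  have "Sc t = Sh t" unfolding Sc_def using 2 by simp
  moreover have "W1c (Sh t) = w1 0 (Sh t)" unfolding W1c_def using sp assms by simp
  moreover have "W1c t = w1 0 t" unfolding W1c_def using assms by simp
  moreover have "w1 0 t = w1 0 (Sh t) + w1 (Sh t) t" using sp by (intro om_add good_hA) auto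
  ultimately show ?thesis unfolding K'_def using 2 by simp
next
  case 3 thus ?thesis unfolding K'_def using th_prop by simp
qed

lemma K_int: "(\<lambda>t. K t) integrable_on {0..1}"
proof (rule measurable_bounded_by_integrable_imp_integrable[where g="\<lambda>_. r^2"])
  have "K' \<in> borel_measurable (lebesgue_on {0..1})" using K'_meas bm_leb by blast
  moreover have "K' t = K t" if "t \<in> space (lebesgue_on {0..1})" for t
    using that K_eq_K' by simp
  ultimately show "(\<lambda>t. K t) \<in> borel_measurable (lebesgue_on {0..1})"
    using measurable_cong[of "lebesgue_on {0..1}" K' "\<lambda>t. K t"] by blast
  show "(\<lambda>_. r^2) integrable_on {0..1::real}" by (rule integrable_const_ivl)
  show "norm (K t) \<le> r^2" if "t \<in> {0..1}" for t using K_nonneg K_le_r2 that by auto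
  show "{0..1::real} \<in> sets lebesgue" by simp
qed

definition aa :: "nat \<Rightarrow> real" where "aa n = exp (-2 * real n - 1)"
definition bb :: "nat \<Rightarrow> real" where "bb n = exp (-2 * real n)"
definition cc :: "nat \<Rightarrow> real" where "cc n = exp (-2 * real n - 2)"
definition pp :: "nat \<Rightarrow> real" where "pp n = exp (2 * real n + 2) / r^2"
definition J :: "nat \<Rightarrow> real set" where "J n = {aa n + pp n .. aa n + cc n}"

lemma e_facts: "exp (-1::real) \<le> 1/2" "exp (-2::real) \<le> 1/4"
proof -
  have e2: "2 \<le> exp (1::real)" using exp_ge_add_one_self[of 1] by simp
  have "exp (-1::real) = 1 / exp 1" by (simp add: exp_minus divide_inverse)
  also have "\<dots> \<le> 1/2" using e2 by (intro divide_left_mono) auto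
  finally show "exp (-1::real) \<le> 1/2" .
  have "exp (-2::real) = exp (-1) * exp (-1)" by (simp add: mult_exp_exp)
  also have "\<dots> \<le> (1/2) * (1/2)" using \<open>exp (-1::real) \<le> 1/2\<close> by (intro mult_mono) auto
  finally show "exp (-2::real) \<le> 1/4" by simp
qed

lemma abc: "aa n = bb n * exp (-1)" "cc n = bb n * exp (-2)" "bb n \<le> 1" "0 < bb n"
  unfolding aa_def bb_def cc_def by (simp_all add: mult_exp_exp algebra_simps)

lemma J_basic: assumes "t \<in> J n"
  shows "aa n < t" "t < bb n" "0 < t" "t < 1" "lev t = 2 * n"
proof -
  have pp0: "0 < pp n" unfolding pp_def using rpos by simp
  show at: "aa n < t" using assms pp0 unfolding J_def by auto
  have "t \<le> aa n + cc n" using assms unfolding J_def by auto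
  also have "\<dots> = bb n * (exp (-1) + exp (-2))" using abc by (simp add: algebra_simps)
  also have "\<dots> < bb n * 1" using e_facts abc(4)[of n] by (intro mult_strict_left_mono) auto
  finally show tb: "t < bb n" by simp
  show "0 < t" using at unfolding aa_def by (meson exp_gt_zero less_trans)
  show "t < 1" using tb abc(3)[of n] by simp
  have "exp (-real (2*n) - 1) < t" "t \<le> exp (-real (2*n))"
    using at tb unfolding aa_def bb_def by (simp_all add: algebra_simps)
  thus "lev t = 2 * n" using tb abc(3)[of n] by (intro lev_eq) auto
qed

lemma J_K: assumes "t \<in> J n" shows "1 / (t - aa n) \<le> K t"
proof -
  note jb = J_basic[OF assms]
  have ca: "cc n \<le> aa n" using abc e_facts by (simp add: mult_left_mono)
  have c0: "0 \<le> cc n" unfolding cc_def by simp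
  have e1: "exp (-real (2*n+1) - 1) = cc n" "exp (-real (2*n+1)) = aa n"
    unfolding cc_def aa_def by (simp_all add: algebra_simps)
  have e2: "exp (-real (2*n) - 1) = aa n" "exp (-real (2*n)) = bb n"
    unfolding bb_def aa_def by (simp_all add: algebra_simps)
  have l1: "w1 (cc n) (aa n) = 0" "w2 (cc n) (aa n) = aa n - cc n"
    using om_level[of "2*n+1" "cc n" "aa n"] ca unfolding e1 by auto
  have l2: "w1 (aa n) t = t - aa n" "w2 (aa n) t = 0"
    using om_level[of "2*n" "aa n" t] jb unfolding e2 by auto
  have w1c: "w1 (cc n) t = t - aa n" using om_add[OF good_hA, of "cc n" "aa n" t] l1 l2 ca jb by simp
  have w2c: "w2 (cc n) t = aa n - cc n" using om_add[OF good_hB, of "cc n" "aa n" t] l1 l2 ca jb by simp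
  have tp: "pp n \<le> t - aa n" using assms unfolding J_def by auto
  have m1: "exp (2 * real n + 2) * aa n = exp 1" unfolding aa_def by (subst mult_exp_exp) simp
  have m2: "exp (2 * real n + 2) * cc n = 1" unfolding cc_def by (subst mult_exp_exp) simp
  have "pp n * (aa n - cc n) = (exp (2 * real n + 2) * aa n - exp (2 * real n + 2) * cc n) / r^2"
    unfolding pp_def by (simp add: algebra_simps)
  hence "pp n * (aa n - cc n) = (exp 1 - 1) / r^2" unfolding m1 m2 .
  moreover have "1 / r^2 \<le> (exp 1 - 1) / r^2"
    using exp_ge_add_one_self[of 1] by (intro divide_right_mono) auto
  moreover have "pp n * (aa n - cc n) \<le> (t - aa n) * (aa n - cc n)"
    using tp ca by (intro mult_right_mono) auto
  ultimately have Dc: "eps \<le> D (cc n) t" unfolding D_eq w1c w2c eps_def by linarith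
  have "eps \<le> D 0 t" using Dc D_mono[of 0 "cc n" t t] c0 ca jb by auto
  hence tth: "th \<le> t" using ge_th jb by auto
  have hA1: "hA t = 1" using hA_level[of "2*n" t] jb unfolding e2 by auto
  note sp = sh_prop[OF tth] and sw = sh_w[OF tth]
  have shc: "cc n \<le> Sh t"
  proof (rule ccontr)
    assume "\<not> cc n \<le> Sh t"
    hence "D (cc n) t < D (Sh t) t"
      using D_strict[of "Sh t" "cc n" t t] sp jb ca Dc eps_pos by auto
    thus False using sp jb Dc by simp
  qed
  have "w1 (Sh t) t \<le> t - aa n" using om_mono[OF good_hA, of "cc n" "Sh t" t t] shc sp jb w1c by auto
  hence "1 / (t - aa n) \<le> 1 / w1 (Sh t) t" using sw jb by (intro divide_left_mono) auto
  thus ?thesis using K2[OF tth] jb hA1 by simp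
qed

definition NN :: nat where "NN = nat (\<lfloor>ln r / 4\<rfloor> - 1)"

lemma NN_bound: "n < NN \<Longrightarrow> real n \<le> ln r / 4 - 2"
  unfolding NN_def by linarith

lemma NN_lower: "ln r / 4 - 2 \<le> real NN"
  unfolding NN_def using lnr by linarith

lemma J_int: assumes "n < NN"
  shows "((\<lambda>t. 1 / (t - aa n)) has_integral (2 * ln r - 4 * real n - 4)) (J n)"
proof -
  have p0: "0 < pp n" unfolding pp_def using rpos by simp
  have lp: "ln (pp n) = 2 * real n + 2 - 2 * ln r" unfolding pp_def using rpos by (simp add: ln_div ln_realpow)
  have lc: "ln (cc n) = -2 * real n - 2" unfolding cc_def by simp
  have "ln (pp n) \<le> ln (cc n)" using lp lc NN_bound[OF assms] lnr by linarith
  hence pc: "pp n \<le> cc n" using p0 by (subst (asm) ln_le_cancel_iff) (auto simp: cc_def)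
  from int_inv[OF p0 pc, of "aa n"] show ?thesis unfolding J_def lp lc by (simp add: algebra_simps)
qed

lemma J_sub: "J n \<subseteq> {0..1}"
proof
  fix t assume "t \<in> J n"
  from J_basic[OF this] show "t \<in> {0..1}" by auto
qed

lemma int_lower: "(ln r)^2 / 8 \<le> integral {0..1} (\<lambda>t. K t)"
proof -
  define phi where "phi t = (\<Sum>n<NN. if t \<in> J n then 1 / (t - aa n) else 0)" for t
  have each: "(\<lambda>t. if t \<in> J n then 1 / (t - aa n) else 0) integrable_on {0..1}
     \<and> integral {0..1} (\<lambda>t. if t \<in> J n then 1 / (t - aa n) else 0) = 2 * ln r - 4 * real n - 4"
    if "n < NN" for n
  proof -
    have JI: "J n \<inter> {0..1} = J n" using J_sub by blast
    show ?thesis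
      unfolding integrable_restrict_Int integral_restrict_Int JI
      using J_int[OF that] by (auto simp: integral_unique has_integral_integrable)
  qed
  have phi_int: "phi integrable_on {0..1}" unfolding phi_def
    by (rule integrable_sum) (use each in auto)
  have phi_val: "integral {0..1} phi = (\<Sum>n<NN. 2 * ln r - 4 * real n - 4)" unfolding phi_def
    by (subst integral_sum) (use each in auto)
  have "(\<Sum>n<NN. ln r) \<le> (\<Sum>n<NN. 2 * ln r - 4 * real n - 4)"
  proof (rule sum_mono)
    fix n assume "n \<in> {..<NN}"
    hence "real n \<le> ln r / 4 - 2" using NN_bound by simp
    thus "ln r \<le> 2 * ln r - 4 * real n - 4" by linarith
  qed
  hence s1: "real NN * ln r \<le> integral {0..1} phi" using phi_val by simp
  have phi_le: "phi t \<le> K t" if "t \<in> {0..1}" for t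
  proof -
    define n0 where "n0 = lev t div 2"
    have "phi t \<le> (\<Sum>n<NN. if n = n0 then K t else 0)" unfolding phi_def
    proof (rule sum_mono)
      fix n assume "n \<in> {..<NN}"
      show "(if t \<in> J n then 1 / (t - aa n) else 0) \<le> (if n = n0 then K t else 0)"
      proof (cases "t \<in> J n")
        case True
        hence "n = n0" unfolding n0_def using J_basic(5)[OF True] by simp
        thus ?thesis using True J_K by simp
      next
        case False thus ?thesis using K_nonneg that by simp
      qed
    qed
    also have "\<dots> \<le> K t" using K_nonneg that by simp
    finally show ?thesis .
  qed
  have "integral {0..1} phi \<le> integral {0..1} (\<lambda>t. K t)"
    by (rule integral_le[OF phi_int K_int phi_le])
  moreover have "(ln r)^2 / 8 \<le> real NN * ln r"
  proof -
    have "(ln r / 4 - 2) * ln r \<le> real NN * ln r" using NN_lower lnr by (intro mult_right_mono) auto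
    moreover have "0 \<le> (ln r / 8 - 2) * ln r" using lnr by (intro mult_nonneg_nonneg) auto
    moreover have "(ln r / 4 - 2) * ln r = (ln r)^2 / 8 + (ln r / 8 - 2) * ln r"
      by (simp add: power2_eq_square algebra_simps)
    ultimately show ?thesis by linarith
  qed
  ultimately show ?thesis using s1 by linarith
qed

definition MM :: nat where "MM = nat \<lfloor>ln r / 2\<rfloor> + 1"
definition psi :: "nat \<Rightarrow> real \<Rightarrow> real" where "psi n t = min (r^2) (1 / (t - aa n))"

lemma MM_bound: "real MM \<le> ln r / 2 + 1"
  unfolding MM_def using lnr by linarith

lemma psi_nonneg: "aa n \<le> t \<Longrightarrow> 0 \<le> psi n t"
  unfolding psi_def by simp

lemma r2_ge1: "1 \<le> r^2"
  using r2 by (smt (verit) one_le_exp_iff)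

lemma K_le_psi: assumes "th \<le> t" "t < 1" "hA t \<noteq> 0"
  shows "lev t div 2 < MM" "aa (lev t div 2) < t" "t \<le> bb (lev t div 2)" "K t \<le> psi (lev t div 2) t"
proof -
  define n where "n = lev t div 2"
  have t0: "0 < t" using assms th_pos by simp
  note lp = lev_prop[OF t0 less_imp_le[OF assms(2)]]
  have ev: "even (lev t)" using hA_level[OF lp] assms(3) by (auto split: if_splits)
  hence m: "lev t = 2 * n" unfolding n_def by simp
  have e2: "exp (-real (2*n) - 1) = aa n" "exp (-real (2*n)) = bb n"
    unfolding bb_def aa_def by (simp_all add: algebra_simps)
  have at: "aa n < t" and tb: "t \<le> bb n" using lp unfolding m e2 by auto
  show "aa (lev t div 2) < t" "t \<le> bb (lev t div 2)" using at tb n_def by auto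
  have "2 / r \<le> bb n" using th_lower assms tb by linarith
  hence "ln (2 / r) \<le> ln (bb n)" using rpos by (subst ln_le_cancel_iff) (auto simp: bb_def)
  hence "ln 2 - ln r \<le> -2 * real n" using rpos by (simp add: ln_div bb_def)
  hence "real n \<le> ln r / 2" using ln_ge_zero[of 2] by linarith
  hence "int n \<le> \<lfloor>ln r / 2\<rfloor>" by (simp add: le_floor_iff)
  thus "lev t div 2 < MM" unfolding MM_def n_def[symmetric] by linarith
  note sp = sh_prop[OF assms(1) less_imp_le[OF assms(2)]] and sw = sh_w[OF assms(1) less_imp_le[OF assms(2)]]
  have sa: "Sh t \<le> aa n"
  proof (rule ccontr)
    assume "\<not> Sh t \<le> aa n"
    hence "w2 (Sh t) t = 0" using om_level(2)[of "2*n" "Sh t" t] sp tb unfolding e2 by auto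
    thus False using sw eps_pos by simp
  qed
  have l2: "w1 (aa n) t = t - aa n" using om_level(1)[of "2*n" "aa n" t] at tb unfolding e2 by auto
  have "t - aa n \<le> w1 (Sh t) t" using om_mono[OF good_hA, of "Sh t" "aa n" t t] sa at l2 by auto
  moreover have "hA t = 1" using hA_level[OF lp] ev by simp
  ultimately have "K t \<le> 1 / (t - aa n)" using K2[OF assms(1,2)] at by (simp add: frac_le)
  moreover have "K t \<le> r^2" using K_le_r2 t0 assms by simp
  ultimately show "K t \<le> psi (lev t div 2) t" unfolding psi_def n_def by simp
qed

lemma int_upper: "integral {0..1} (\<lambda>t. K t) \<le> 3 * (ln r)^2"
proof -
  define T0 where "T0 t = (if t \<in> {0..th} then r^2 * th else 0)" for t
  define Tn where "Tn n t = (if t \<in> {aa n..bb n} then psi n t else 0)" for n t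
  define G where "G t = T0 t + (\<Sum>n<MM. Tn n t)" for t
  have sub0: "{0..th} \<inter> {0..1} = {0..th}" using th_prop by auto
  have T0i: "T0 integrable_on {0..1}" "integral {0..1} T0 = r^2 * th * th"
    unfolding T0_def integrable_restrict_Int integral_restrict_Int sub0 using th_prop by auto
  have ab: "0 \<le> aa n" "aa n \<le> bb n" "bb n \<le> aa n + 1" "bb n \<le> 1" for n
  proof -
    show a0: "0 \<le> aa n" unfolding aa_def by simp
    show "bb n \<le> 1" using abc(3) .
    thus "bb n \<le> aa n + 1" using a0 by linarith
    have "bb n * exp (-1) \<le> bb n * 1" using abc(4)[of n] e_facts by (intro mult_left_mono) auto
    thus "aa n \<le> bb n" using abc(1)[of n] by simp
  qed
  have subn: "{aa n..bb n} \<inter> {0..1} = {aa n..bb n}" for n using ab[of n] by auto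
  have pint: "(psi n has_integral (1 + ln (r^2))) {aa n..aa n + 1}" for n
    unfolding psi_def by (rule int_psi[OF r2_ge1])
  have pin: "psi n integrable_on {aa n..bb n}" for n
    by (rule integrable_on_subinterval[OF has_integral_integrable[OF pint]]) (use ab in auto)
  have Tni: "Tn n integrable_on {0..1}" "integral {0..1} (Tn n) \<le> 1 + 2 * ln r" for n
  proof -
    show "Tn n integrable_on {0..1}"
      unfolding Tn_def integrable_restrict_Int subn by (rule pin)
    have "integral {0..1} (Tn n) = integral {aa n..bb n} (psi n)"
      unfolding Tn_def integral_restrict_Int subn ..
    also have "\<dots> \<le> integral {aa n..aa n + 1} (psi n)"
      by (rule integral_subset_le) (use ab pin has_integral_integrable[OF pint] psi_nonneg in auto)
    also have "\<dots> = 1 + 2 * ln r" using integral_unique[OF pint] rpos by (simp add: ln_realpow)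
    finally show "integral {0..1} (Tn n) \<le> 1 + 2 * ln r" .
  qed
  have Gi: "G integrable_on {0..1}" unfolding G_def
    by (intro integrable_add integrable_sum T0i Tni) auto
  have Gv: "integral {0..1} G = r^2 * th * th + (\<Sum>n<MM. integral {0..1} (Tn n))"
  proof -
    have "integral {0..1} G = integral {0..1} T0 + integral {0..1} (\<lambda>t. \<Sum>n<MM. Tn n t)"
      unfolding G_def by (rule integral_add) (auto intro!: integrable_sum Tni T0i)
    also have "integral {0..1} (\<lambda>t. \<Sum>n<MM. Tn n t) = (\<Sum>n<MM. integral {0..1} (Tn n))"
      by (rule integral_sum) (auto intro: Tni)
    finally show ?thesis using T0i by simp
  qed
  have Tn0: "0 \<le> Tn n t" for n t unfolding Tn_def using psi_nonneg by auto
  have T00: "0 \<le> T0 t" for t unfolding T0_def by auto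
  have KG: "K t \<le> G t" if "t \<in> {0..1}" for t
  proof -
  have t01: "0 \<le> t" "t \<le> 1" using that by auto
  from t01 show ?thesis
  proof (cases rule: K_cases)
    case 1
    have "w2 0 t \<le> t" using om_le[OF good_hB, of 0 t] that by simp
    moreover have "0 \<le> w2 0 t" "0 \<le> hA t" "hA t \<le> 1" using om_nonneg[OF good_hB] good_hA unfolding good_def by auto
    ultimately have "w2 0 t * hA t \<le> th" using 1 by (smt (verit) mult_left_le)
    hence "r^2 * (w2 0 t * hA t) \<le> r^2 * th" by (intro mult_left_mono) auto
    hence "K t \<le> T0 t" using 1 that unfolding T0_def by (simp add: algebra_simps)
    moreover have "0 \<le> (\<Sum>n<MM. Tn n t)" by (intro sum_nonneg Tn0)
    ultimately show ?thesis unfolding G_def by linarith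
  next
    case 2
    show ?thesis
    proof (cases "hA t = 0")
      case True
      hence "K t = 0" using 2 by simp
      moreover have "0 \<le> (\<Sum>n<MM. Tn n t)" by (intro sum_nonneg Tn0)
      ultimately show ?thesis unfolding G_def using T00[of t] by linarith
    next
      case False
      note kp = K_le_psi[OF 2(1,2) False]
      let ?n = "lev t div 2"
      have "K t \<le> Tn ?n t" unfolding Tn_def using kp by auto
      also have "\<dots> \<le> (\<Sum>n<MM. Tn n t)" by (rule member_le_sum) (use kp Tn0 in auto)
      finally show ?thesis unfolding G_def using T00[of t] by linarith
    qed
  next
    case 3
    moreover have "0 \<le> (\<Sum>n<MM. Tn n t)" by (intro sum_nonneg Tn0)
    ultimately show ?thesis unfolding G_def using T00[of t] by linarith
  qed
  qed
  have "integral {0..1} (\<lambda>t. K t) \<le> integral {0..1} G"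
    by (rule integral_le[OF K_int Gi KG])
  also have "\<dots> \<le> r^2 * th * th + real MM * (1 + 2 * ln r)"
  proof -
    have "(\<Sum>n<MM. integral {0..1} (Tn n)) \<le> (\<Sum>n<MM. 1 + 2 * ln r)" by (intro sum_mono Tni)
    thus ?thesis unfolding Gv by simp
  qed
  also have "\<dots> \<le> 3 * (ln r)^2"
  proof -
    have "r^2 * th * th = th^2 * r^2" by (simp add: power2_eq_square algebra_simps)
    hence a: "r^2 * th * th \<le> exp 5" using th_upper by linarith
    have "exp (5::real) = exp 1 ^ 5" using exp_of_nat_mult[of 5 1] by simp
    also have "\<dots> \<le> 3 ^ 5" by (intro power_mono exp_le) auto
    finally have "exp (5::real) \<le> 243" by simp
    moreover have "256 \<le> (ln r)^2" using lnr power_mono[of 16 "ln r" 2] by simp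
    moreover have "real MM * (1 + 2 * ln r) \<le> (ln r / 2 + 1) * (1 + 2 * ln r)"
      using MM_bound lnr by (intro mult_right_mono) auto
    moreover have "(ln r / 2 + 1) * (1 + 2 * ln r) = (ln r)^2 + 5/2 * ln r + 1"
      by (simp add: power2_eq_square algebra_simps)
    moreover have "5/2 * ln r + 1 \<le> (ln r)^2"
    proof -
      have "16 * ln r \<le> ln r * ln r" using lnr by (intro mult_right_mono) auto
      moreover have "(ln r)^2 = ln r * ln r" by (simp add: power2_eq_square)
      ultimately show ?thesis using lnr by linarith
    qed
    ultimately show ?thesis using a by linarith
  qed
  finally show ?thesis .
qed

end


theorem proposition7p5:
  shows "\<exists>c1 c2 c3 c4 R. 0 < c1 \<and> 0 < c2 \<and> 0 < c3 \<and> 0 < c4 \<and>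
    (\<forall>r. r > rzero hA hB hC \<and> r \<ge> R \<longrightarrow>
        c1 * ln r \<le> real (kappa hA hB hC r) \<and> real (kappa hA hB hC r) \<le> c2 * ln r \<and>
        c3 * (ln r)\<^sup>2 \<le> integral {0..1} (\<lambda>t. KH hA hB hC t r) \<and>
        integral {0..1} (\<lambda>t. KH hA hB hC t r) \<le> c4 * (ln r)\<^sup>2)"
proof -
  have main: "1/4 * ln r \<le> real (kappa hA hB hC r) \<and> real (kappa hA hB hC r) \<le> 2 * ln r \<and>
        1/8 * (ln r)\<^sup>2 \<le> integral {0..1} (\<lambda>t. KH hA hB hC t r) \<and>
        integral {0..1} (\<lambda>t. KH hA hB hC t r) \<le> 3 * (ln r)\<^sup>2" if a: "exp 16 \<le> r" for r :: real
  proof -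
    interpret rc r using a by unfold_locales
    show ?thesis using ka_lower ka_upper int_lower int_upper unfolding ka_def by simp
  qed
  show ?thesis
    by (rule exI[of _ "1/4"], rule exI[of _ 2], rule exI[of _ "1/8"], rule exI[of _ 3], rule exI[of _ "exp 16"])
       (use main in auto)
qed

end
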